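(* For all integers $L\ge1$ and $M\ge L+1$, $$\sigma_{\min}\Big(\frac{\bar B}{\sqrt M}\Big)\ge\frac{1}{L^2\,2^{7L}(2L+1)}\left(\frac{M+L}{eM}\right)^{L+0.5}.$$
   Context: $\bar B$ is the $M\times(L+1)$ real Vandermonde matrix with entries $\bar B_{i,j}=(i/M)^{j}$ for $1\le i\le M$, $0\le j\le L$ (so its first column is all ones). $\sigma_{\min}$ denotes the smallest singular value. *)

theory Defs
  imports "HOL-Analysis.Analysis"
begin

text \<open>Matrices of size m x n are represented as functions nat => nat => real,
  with row indices i < m and column indices j < n (0-based).\<close>

definition mat_vec_norm :: "nat \<Rightarrow> nat \<Rightarrow> (nat \<Rightarrow> nat \<Rightarrow> real) \<Rightarrow> (nat \<Rightarrow> real) \<Rightarrow> real" where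
  "mat_vec_norm m n A x = sqrt (\<Sum>i<m. (\<Sum>j<n. A i j * x j)\<^sup>2)"

definition sigma_min :: "nat \<Rightarrow> nat \<Rightarrow> (nat \<Rightarrow> nat \<Rightarrow> real) \<Rightarrow> real" where
  "sigma_min m n A = Inf {mat_vec_norm m n A x | x. (\<Sum>j<n. (x j)\<^sup>2) = 1}"

text \<open>The M x (L+1) Vandermonde matrix Bbar with entries (i/M)^j, 1 <= i <= M, 0 <= j <= L,
  stored 0-based: row index i corresponds to i+1.\<close>

definition Bbar :: "nat \<Rightarrow> nat \<Rightarrow> nat \<Rightarrow> real" where
  "Bbar M i j = (real (i + 1) / real M) ^ j"

end

theory Submission
  imports Defs "HOL-Computational_Algebra.Polynomial"
begin

lemma coeff_prod_lin_bound:
  fixes a :: "nat \<Rightarrow> real"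
  assumes "finite S" "\<And>m. m \<in> S \<Longrightarrow> \<bar>a m\<bar> \<le> 1"
  shows "\<bar>coeff (\<Prod>m\<in>S. [:- a m, 1:]) j\<bar> \<le> 2 ^ card S"
  using assms
proof (induction S arbitrary: j rule: finite_induct)
  case empty
  then show ?case by (cases j) auto
next
  case (insert y S)
  define q where "q = (\<Prod>m\<in>S. [:- a m, 1:])"
  have IH: "\<And>i. \<bar>coeff q i\<bar> \<le> 2 ^ card S" using insert unfolding q_def by auto
  have ay: "\<bar>a y\<bar> \<le> 1" using insert by auto
  have eq: "(\<Prod>m\<in>insert y S. [:- a m, 1:]) = smult (- a y) q + pCons 0 q"
    using insert unfolding q_def by (simp add: mult_pCons_left)
  have c1: "\<bar>- a y * coeff q j\<bar> \<le> 2 ^ card S"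
  proof -
    have "\<bar>- a y * coeff q j\<bar> = \<bar>a y\<bar> * \<bar>coeff q j\<bar>" by (simp add: abs_mult)
    also have "\<dots> \<le> 1 * 2 ^ card S" using ay IH[of j] by (intro mult_mono) auto
    finally show ?thesis by simp
  qed
  have c2: "\<bar>coeff (pCons 0 q) j\<bar> \<le> 2 ^ card S"
    using IH by (cases j) auto
  have "\<bar>coeff (\<Prod>m\<in>insert y S. [:- a m, 1:]) j\<bar> \<le> \<bar>- a y * coeff q j\<bar> + \<bar>coeff (pCons 0 q) j\<bar>"
    unfolding eq by (simp add: abs_triangle_ineq del: coeff_pCons)
  also have "\<dots> \<le> 2 ^ card S + 2 ^ card S" using c1 c2 by linarith
  also have "\<dots> = 2 ^ card (insert y S)" using insert by simp
  finally show ?case .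
qed

lemma prod_lt_dist: "(\<Prod>m<k. \<bar>real k - real m\<bar>) = fact k"
proof (induction k)
  case 0 then show ?case by simp
next
  case (Suc k)
  have "(\<Prod>m<Suc k. \<bar>real (Suc k) - real m\<bar>) = real (Suc k) * (\<Prod>m<k. \<bar>real k - real m\<bar>)"
    by (subst prod.lessThan_Suc_shift) simp
  then show ?case using Suc by (simp add: fact_Suc)
qed

lemma prod_dist:
  assumes "k \<le> L"
  shows "(\<Prod>m\<in>{..L}-{k}. \<bar>real k - real m\<bar>) = fact k * fact (L - k)"
  using assms
proof (induction L rule: dec_induct)
  case base
  have "{..k}-{k} = {..<k}" by auto
  then show ?case using prod_lt_dist by simp
next
  case (step n)
  have "{..Suc n}-{k} = insert (Suc n) ({..n}-{k})" using step by auto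
  then have "(\<Prod>m\<in>{..Suc n}-{k}. \<bar>real k - real m\<bar>)
      = \<bar>real k - real (Suc n)\<bar> * (\<Prod>m\<in>{..n}-{k}. \<bar>real k - real m\<bar>)"
    by simp
  also have "\<dots> = real (Suc n - k) * (fact k * fact (n - k))"
    using step by (simp add: of_nat_diff)
  also have "\<dots> = fact k * fact (Suc n - k)"
    using step by (simp add: Suc_diff_le fact_Suc)
  finally show ?case .
qed

lemma pow_fact: "(real n + 1) ^ n \<le> 3 ^ n * fact n"
proof (induction n)
  case 0 then show ?case by simp
next
  case (Suc n)
  have "1 + 1 / (real n + 1) \<le> exp (1 / (real n + 1))" by (rule exp_ge_add_one_self)
  then have "(1 + 1 / (real n + 1)) ^ Suc n \<le> exp (1 / (real n + 1)) ^ Suc n"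
    by (intro power_mono) (auto simp: add_nonneg_nonneg)
  also have "\<dots> = exp (real (Suc n) * (1 / (real n + 1)))" by (subst exp_of_nat_mult) simp
  also have "\<dots> = exp 1" by simp
  also have "\<dots> \<le> 3" by (rule exp_le)
  finally have A: "(1 + 1 / (real n + 1)) ^ Suc n \<le> 3" .
  have "(real (Suc n) + 1) ^ Suc n = (real n + 1) ^ Suc n * (1 + 1 / (real n + 1)) ^ Suc n"
  proof -
    have "(real n + 1) * (1 + 1 / (real n + 1)) = real (Suc n) + 1" by (simp add: field_simps)
    then show ?thesis by (metis power_mult_distrib)
  qed
  also have "\<dots> \<le> (real n + 1) ^ Suc n * 3"
    using A by (intro mult_left_mono) auto
  also have "\<dots> = 3 * (real n + 1) * (real n + 1) ^ n" by simp
  also have "\<dots> \<le> 3 * (real n + 1) * (3 ^ n * fact n)"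
    using Suc by (intro mult_left_mono) auto
  also have "\<dots> = 3 ^ Suc n * fact (Suc n)" by (simp add: fact_Suc algebra_simps)
  finally show ?case .
qed

lemma interp_bound:
  fixes P :: "real poly" and t :: "nat \<Rightarrow> real" and h :: real
  assumes deg: "degree P \<le> L" and h: "h > 0"
    and sep: "\<And>k m. k \<le> L \<Longrightarrow> m \<le> L \<Longrightarrow> h * \<bar>real k - real m\<bar> \<le> \<bar>t k - t m\<bar>"
    and bnd: "\<And>m. m \<le> L \<Longrightarrow> \<bar>t m\<bar> \<le> 1"
  shows "\<bar>coeff P j\<bar> \<le> (\<Sum>k\<le>L. \<bar>poly P (t k)\<bar> * 2^L / (h^L * fact k * fact (L-k)))"
proof -
  define d where "d k = (\<Prod>m\<in>{..L}-{k}. t k - t m)" for k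
  define l where "l k = (\<Prod>m\<in>{..L}-{k}. [:- t m, 1:])" for k
  have card: "card ({..L}-{k}) = L" if "k \<le> L" for k using that by simp
  have dpos: "h^L * fact k * fact (L-k) \<le> \<bar>d k\<bar>" if "k \<le> L" for k
  proof -
    have "h^L * fact k * fact (L-k) = (\<Prod>m\<in>{..L}-{k}. h * \<bar>real k - real m\<bar>)"
      using prod_dist[OF that] card[OF that] by (simp add: prod.distrib)
    also have "\<dots> \<le> (\<Prod>m\<in>{..L}-{k}. \<bar>t k - t m\<bar>)"
      by (rule prod_mono) (use sep that h in auto)
    also have "\<dots> = \<bar>d k\<bar>" by (simp add: d_def abs_prod)
    finally show ?thesis .
  qed
  have hp: "h^L * fact k * fact (L-k) > 0" for k using h by simp
  have dnz: "d k \<noteq> 0" if "k \<le> L" for k using dpos[OF that] hp[of k] by auto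
  have poly_l: "poly (l k) y = (\<Prod>m\<in>{..L}-{k}. y - t m)" for k y by (simp add: l_def poly_prod)
  have l_zero: "poly (l k) (t i) = 0" if "i \<le> L" "i \<noteq> k" for i k
    unfolding poly_l using that by (intro prod_zero) auto
  have l_self: "poly (l k) (t k) = d k" for k by (simp add: poly_l d_def)
  have deg_l: "degree (l k) \<le> L" if "k \<le> L" for k
  proof -
    have "degree (l k) \<le> sum (degree \<circ> (\<lambda>m. [:- t m, 1:])) ({..L}-{k})"
      unfolding l_def by (rule degree_prod_sum_le) simp
    also have "\<dots> = L" using card[OF that] by simp
    finally show ?thesis .
  qed
  have coeff_l: "\<bar>coeff (l k) j\<bar> \<le> 2^L" if "k \<le> L" for k j
    using coeff_prod_lin_bound[of "{..L}-{k}" t j] card[OF that] bnd unfolding l_def by auto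
  define R where "R = (\<Sum>k\<le>L. smult (poly P (t k) / d k) (l k))"
  have polyR: "poly R y = (\<Sum>k\<le>L. poly P (t k) / d k * poly (l k) y)" for y
    by (simp add: R_def poly_sum)
  have polyR': "poly R (t i) = poly P (t i)" if "i \<le> L" for i
  proof -
    have "poly R (t i) = poly P (t i) / d i * poly (l i) (t i)
        + (\<Sum>k\<in>{..L}-{i}. poly P (t k) / d k * poly (l k) (t i))"
      unfolding polyR using that by (subst sum.remove[of _ i]) auto
    also have "(\<Sum>k\<in>{..L}-{i}. poly P (t k) / d k * poly (l k) (t i)) = 0"
      using that by (intro sum.neutral) (auto simp: l_zero)
    finally show ?thesis using l_self dnz[OF that] by simp
  qed
  have degR: "degree R \<le> L"
  proof (rule degree_le, intro allI impI)
    fix i assume "L < i"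
    then have "coeff (l k) i = 0" if "k \<le> L" for k using deg_l[OF that] by (intro coeff_eq_0) auto
    then show "coeff R i = 0" by (simp add: R_def coeff_sum)
  qed
  have inj: "inj_on t {..L}"
  proof (rule inj_onI)
    fix a b assume "a \<in> {..L}" "b \<in> {..L}" "t a = t b"
    then have "h * \<bar>real a - real b\<bar> \<le> 0" using sep[of a b] by auto
    then show "a = b" using h by (simp add: mult_le_0_iff)
  qed
  have cardt: "card (t ` {..L}) = L + 1" using card_image[OF inj] by simp
  have "P = R"
    by (rule poly_eqI_degree[of "t ` {..L}"]) (use polyR' cardt deg degR in auto)
  then have "coeff P j = coeff R j" by simp
  also have "\<dots> = (\<Sum>k\<le>L. poly P (t k) / d k * coeff (l k) j)"
    by (simp add: R_def coeff_sum)
  also have "\<bar>\<dots>\<bar> \<le> (\<Sum>k\<le>L. \<bar>poly P (t k) / d k * coeff (l k) j\<bar>)" by (rule sum_abs)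
  also have "\<dots> \<le> (\<Sum>k\<le>L. \<bar>poly P (t k)\<bar> * 2^L / (h^L * fact k * fact (L-k)))"
  proof (rule sum_mono)
    fix k assume k: "k \<in> {..L}"
    have "\<bar>poly P (t k) / d k * coeff (l k) j\<bar> = \<bar>poly P (t k)\<bar> * \<bar>coeff (l k) j\<bar> / \<bar>d k\<bar>"
      by (simp add: abs_mult)
    also have "\<dots> \<le> \<bar>poly P (t k)\<bar> * 2^L / \<bar>d k\<bar>"
      using coeff_l[of k j] k by (intro divide_right_mono mult_left_mono) auto
    also have "\<dots> \<le> \<bar>poly P (t k)\<bar> * 2^L / (h^L * fact k * fact (L-k))"
      using dpos[of k] k hp[of k] by (intro divide_left_mono) auto
    finally show "\<bar>poly P (t k) / d k * coeff (l k) j\<bar> \<le> \<bar>poly P (t k)\<bar> * 2^L / (h^L * fact k * fact (L-k))" .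
  qed
  finally show ?thesis .
qed

lemma sum_inv_fact: "(\<Sum>k\<le>L. 1 / (fact k * fact (L-k) :: real)) = 2^L / fact L"
proof -
  have "(\<Sum>k\<le>L. 1 / (fact k * fact (L-k) :: real)) = (\<Sum>k\<le>L. real (L choose k) / fact L)"
    by (intro sum.cong refl) (simp add: binomial_fact)
  also have "\<dots> = real (\<Sum>k\<le>L. L choose k) / fact L"
    by (simp add: sum_divide_distrib)
  also have "\<dots> = 2^L / fact L" by (simp add: choose_row_sum)
  finally show ?thesis .
qed

lemma block_bound:
  fixes P :: "real poly" and t :: "nat \<Rightarrow> real" and h :: real and x :: "nat \<Rightarrow> real"
  assumes deg: "degree P \<le> L" and cf: "\<And>j. j \<le> L \<Longrightarrow> coeff P j = x j"
    and xs: "(\<Sum>j\<le>L. (x j)^2) = 1"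
    and h: "1 / (2 * (real L + 1)) \<le> h"
    and sep: "\<And>k m. k \<le> L \<Longrightarrow> m \<le> L \<Longrightarrow> h * \<bar>real k - real m\<bar> \<le> \<bar>t k - t m\<bar>"
    and bnd: "\<And>m. m \<le> L \<Longrightarrow> \<bar>t m\<bar> \<le> 1"
  shows "1 / ((real L + 1) * (24^L)^2) \<le> (\<Sum>k\<le>L. (poly P (t k))^2)"
proof -
  define Q where "Q = (\<Sum>k\<le>L. (poly P (t k))^2)"
  have hpos: "h > 0" using h by (smt (verit) divide_pos_pos of_nat_0_le_iff)
  have Q0: "Q \<ge> 0" unfolding Q_def by (intro sum_nonneg) auto
  have pk: "\<bar>poly P (t k)\<bar> \<le> sqrt Q" if "k \<le> L" for k
  proof -
    have "(poly P (t k))^2 \<le> Q" unfolding Q_def using that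
      by (intro member_le_sum) auto
    then show ?thesis by (metis real_sqrt_abs real_sqrt_le_mono)
  qed
  define K where "K = 4^L / (h^L * fact L)"
  have hf: "1 / 6^L \<le> h^L * fact L"
  proof -
    have "(1 / (2 * (real L + 1)))^L \<le> h^L" using h by (intro power_mono) auto
    then have a: "1 / (2^L * (real L + 1)^L) \<le> h^L" by (simp add: power_divide power_mult_distrib[symmetric])
    have b: "(real L + 1)^L / 3^L \<le> fact L" using pow_fact[of L] by (simp add: field_simps)
    have "1 / 6^L = (1 / (2^L * (real L + 1)^L)) * ((real L + 1)^L / 3^L)"
      by (simp add: field_simps power_mult_distrib[symmetric])
    also have "\<dots> \<le> h^L * fact L" using a b hpos by (intro mult_mono) auto
    finally show ?thesis .
  qed
  have K: "K \<le> 24^L"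
  proof -
    have pos: "0 < h^L * fact L" using hpos by simp
    have "K \<le> 4^L / (1 / 6^L)" unfolding K_def using hf pos by (intro divide_left_mono) auto
    also have "\<dots> = 24^L" by (simp add: power_mult_distrib[symmetric])
    finally show ?thesis .
  qed
  have xj: "\<bar>x j\<bar> \<le> sqrt Q * K" if "j \<le> L" for j
  proof -
    have "\<bar>x j\<bar> = \<bar>coeff P j\<bar>" using cf[OF that] by simp
    also have "\<dots> \<le> (\<Sum>k\<le>L. \<bar>poly P (t k)\<bar> * 2^L / (h^L * fact k * fact (L-k)))"
      by (rule interp_bound[OF deg hpos sep bnd]) auto
    also have "\<dots> \<le> (\<Sum>k\<le>L. sqrt Q * (2^L / h^L) * (1 / (fact k * fact (L-k))))"
    proof (rule sum_mono)
      fix k assume "k \<in> {..L}"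
      then have "\<bar>poly P (t k)\<bar> * 2^L / (h^L * fact k * fact (L-k)) \<le> sqrt Q * 2^L / (h^L * fact k * fact (L-k))"
        using pk[of k] hpos by (intro divide_right_mono mult_right_mono) auto
      then show "\<bar>poly P (t k)\<bar> * 2^L / (h^L * fact k * fact (L-k)) \<le> sqrt Q * (2^L / h^L) * (1 / (fact k * fact (L-k)))"
        by (simp add: field_simps)
    qed
    also have "\<dots> = sqrt Q * (2^L / h^L) * (2^L / fact L)"
      by (subst sum_distrib_left[symmetric]) (simp only: sum_inv_fact)
    also have "\<dots> = sqrt Q * K" unfolding K_def
      by (simp add: field_simps power_mult_distrib[symmetric])
    finally show ?thesis .
  qed
  have x2: "(x j)^2 \<le> Q * (24^L)^2" if "j \<le> L" for j
  proof -
    have "\<bar>x j\<bar> \<le> sqrt Q * 24^L"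
      using xj[OF that] K Q0 by (meson order_trans mult_left_mono real_sqrt_ge_zero)
    then have "\<bar>x j\<bar>^2 \<le> (sqrt Q * 24^L)^2" by (intro power_mono) auto
    then show ?thesis using Q0 by (simp add: power_mult_distrib)
  qed
  have "1 \<le> (\<Sum>j\<le>L. Q * (24^L)^2)" unfolding xs[symmetric]
    by (intro sum_mono x2) auto
  then have "1 \<le> (real L + 1) * (24^L)^2 * Q" by (simp add: algebra_simps)
  then show ?thesis unfolding Q_def[symmetric]
    by (simp add: divide_le_eq mult.commute)
qed

lemma block_sum:
  fixes g :: "nat \<Rightarrow> real" and L s N :: nat
  assumes g: "\<And>i. g i \<ge> 0" and sM: "(L + 1) * s \<le> N"
  shows "(\<Sum>r<s. (\<Sum>k\<le>L. g (r + k * s))) \<le> (\<Sum>i<N. g i)"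
proof -
  define f where "f = (\<lambda>(r,k). r + k * s)"
  have inj: "inj_on f ({..<s} \<times> {..L})"
  proof (rule inj_onI)
    fix p q assume a: "p \<in> {..<s} \<times> {..L}" "q \<in> {..<s} \<times> {..L}" "f p = f q"
    obtain r k where p: "p = (r, k)" by (cases p)
    obtain r' k' where q: "q = (r', k')" by (cases q)
    have rs: "r < s" "r' < s" using a p q by auto
    have e: "r + k * s = r' + k' * s" using a p q by (simp add: f_def)
    then have "(r + k * s) mod s = (r' + k' * s) mod s" "(r + k * s) div s = (r' + k' * s) div s" by simp_all
    then show "p = q" using rs p q by simp
  qed
  have sub: "f ` ({..<s} \<times> {..L}) \<subseteq> {..<N}"
  proof clarify
    fix r k assume "r < s" "k \<le> L"
    then have "r + k * s < s + L * s" by (intro add_less_le_mono) auto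
    also have "\<dots> = (L+1) * s" by simp
    finally show "f (r,k) < N" using sM by (simp add: f_def)
  qed
  have "(\<Sum>r<s. (\<Sum>k\<le>L. g (r + k * s))) = (\<Sum>p\<in>{..<s} \<times> {..L}. g (f p))"
    by (simp add: sum.cartesian_product f_def split_beta)
  also have "\<dots> = (\<Sum>i\<in>f ` ({..<s} \<times> {..L}). g i)"
    by (rule sum.reindex[OF inj, symmetric, unfolded comp_def])
  also have "\<dots> \<le> (\<Sum>i<N. g i)" by (rule sum_mono2) (use sub g in auto)
  finally show ?thesis .
qed

theorem lemma2:
  fixes L M :: nat
  assumes "L \<ge> 1" and "M \<ge> L + 1"
  shows "sigma_min M (L + 1) (\<lambda>i j. Bbar M i j / sqrt (real M))
           \<ge> 1 / (real L ^ 2 * 2 ^ (7 * L) * (2 * real L + 1))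
             * ((real M + real L) / (exp 1 * real M)) powr (real L + 0.5)"
proof -
  define a where "a = 1 / (real L ^ 2 * 2 ^ (7 * L) * (2 * real L + 1))"
  define b where "b = ((real M + real L) / (exp 1 * real M)) powr (real L + 0.5)"
  have Mpos: "M > 0" using assms by simp
  have apos: "a > 0" unfolding a_def using assms by simp
  have e2: "2 \<le> exp (1::real)" using exp_ge_add_one_self[of "1::real"] by simp
  have b1: "b \<le> 1" unfolding b_def
  proof (rule powr_le1)
    have "real M + real L \<le> 2 * real M" using assms by simp
    also have "\<dots> \<le> exp 1 * real M" using e2 by (intro mult_right_mono) auto
    finally have "real M + real L \<le> exp 1 * real M" .
    then show "\<bar>(real M + real L) / (exp 1 * real M)\<bar> \<le> 1"
      using Mpos by (simp add: divide_le_eq)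
  qed simp
  have ab: "a * b \<le> a" using b1 apos by (intro mult_left_le) auto
  define s where "s = M div (L+1)"
  have sM: "(L+1) * s \<le> M" unfolding s_def using times_div_less_eq_dividend[of "L+1" M] by simp
  have Ms: "M < (L+1)*(s+1)"
  proof -
    have "M = (L+1) * s + M mod (L+1)" unfolding s_def by (metis div_mult_mod_eq mult.commute)
    moreover have "M mod (L+1) < L+1" by simp
    moreover have "(L+1)*(s+1) = (L+1) * s + (L+1)" by simp
    ultimately show ?thesis by linarith
  qed
  have s1: "s \<ge> 1" unfolding s_def using assms by (simp add: div_le_mono[of "L+1" M "L+1", simplified])
  have M2s: "real M \<le> 2 * (real L + 1) * real s"
  proof -
    have "(L+1)*(s+1) \<le> (L+1)*(2 * s)" by (intro mult_le_mono2) (use s1 in simp)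
    then have "M \<le> (L+1)*(2 * s)" using Ms by linarith
    then have "real M \<le> real ((L+1)*(2 * s))" by (simp only: of_nat_le_iff)
    then show ?thesis by (simp add: algebra_simps)
  qed
  have key: "a \<le> mat_vec_norm M (L+1) (\<lambda>i j. Bbar M i j / sqrt (real M)) x"
    if hx: "(\<Sum>j<L+1. (x j)^2) = 1" for x
  proof -
    define g where "g i = (\<Sum>j<L+1. x j * (real (i+1) / real M)^j)" for i
    define S where "S = (\<Sum>i<M. (g i)^2)"
    have eq: "mat_vec_norm M (L+1) (\<lambda>i j. Bbar M i j / sqrt (real M)) x = sqrt (S / real M)"
    proof -
      have "(\<Sum>j<L+1. Bbar M i j / sqrt (real M) * x j) = g i / sqrt (real M)" for i
        unfolding g_def Bbar_def sum_divide_distrib by (intro sum.cong) (simp_all add: mult.commute)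
      then have "(\<Sum>j<L+1. Bbar M i j / sqrt (real M) * x j)^2 = (g i)^2 / real M" for i
        by (simp add: power_divide)
      then show ?thesis unfolding mat_vec_norm_def S_def by (simp add: sum_divide_distrib)
    qed
    define P where "P = (\<Sum>j\<le>L. monom (x j) j)"
    have polyP: "poly P y = (\<Sum>j<L+1. x j * y^j)" for y
      by (simp add: P_def poly_sum poly_monom lessThan_Suc_atMost)
    have coeffP: "coeff P j = x j" if "j \<le> L" for j
      using that by (simp add: P_def coeff_sum coeff_monom)
    have degP: "degree P \<le> L"
      by (rule degree_le) (simp add: P_def coeff_sum coeff_monom)
    have xsum: "(\<Sum>j\<le>L. (x j)^2) = 1" using hx by (simp add: lessThan_Suc_atMost)
    have blk: "1 / ((real L + 1) * (24^L)^2) \<le> (\<Sum>k\<le>L. (g (r + k * s))^2)" if r: "r < s" for r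
    proof -
      define t where "t k = real (r + k * s + 1) / real M" for k
      define h where "h = real s / real M"
      have gt: "g (r + k * s) = poly P (t k)" for k unfolding g_def polyP t_def by simp
      have "1 / ((real L + 1) * (24^L)^2) \<le> (\<Sum>k\<le>L. (poly P (t k))^2)"
      proof (rule block_bound[OF degP coeffP xsum])
        show "1 / (2 * (real L + 1)) \<le> h" unfolding h_def using M2s Mpos s1
          by (simp add: field_simps)
        show "h * \<bar>real k - real m\<bar> \<le> \<bar>t k - t m\<bar>" for k m
        proof -
          have "t k - t m = (real k - real m) * h" unfolding t_def h_def using Mpos
            by (simp add: field_simps)
          then show ?thesis using Mpos by (simp add: abs_mult h_def mult.commute)
        qed
        show "\<bar>t m\<bar> \<le> 1" if "m \<le> L" for m
        proof -
          have "r + m * s + 1 \<le> s + L * s" using r that mult_le_mono1[of m L s] by linarith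
          also have "\<dots> \<le> M" using sM by simp
          finally have "real (r + m * s + 1) \<le> real M" by linarith
          then show ?thesis unfolding t_def using Mpos by (simp add: divide_le_eq)
        qed
      qed auto
      then show ?thesis using gt by simp
    qed
    have "real s * (1 / ((real L + 1) * (24^L)^2)) = (\<Sum>r<s. 1 / ((real L + 1) * (24^L)^2))" by simp
    also have "\<dots> \<le> (\<Sum>r<s. (\<Sum>k\<le>L. (g (r + k * s))^2))" by (intro sum_mono blk) auto
    also have "\<dots> \<le> S" unfolding S_def by (rule block_sum[OF _ sM]) auto
    finally have Slow: "real s / ((real L + 1) * (24^L)^2) \<le> S" by simp
    have c1: "(24::real)^L * 24^L \<le> 2^(7*L) * 2^(7*L)"
    proof -
      have "(24::real)^L \<le> 128^L" by (intro power_mono) auto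
      also have "(128::real)^L = 2^(7*L)" by (simp add: power_mult)
      finally show ?thesis by (intro mult_mono) auto
    qed
    have c2: "2 * (real L + 1)^2 \<le> (real L^2 * (2 * real L + 1))^2"
    proof -
      define y where "y = real L"
      have L1: "y \<ge> 1" using assms by (simp add: y_def)
      have "(y + 1)^2 \<le> (2*y)^2" using L1 by (intro power_mono) auto
      then have A: "2 * (y + 1)^2 \<le> 8 * y^2" by (simp add: power_mult_distrib)
      have y2: "y^2 \<ge> 1" using L1 by (simp add: one_le_power)
      have B: "y^2 \<le> y^2 * y^2" using mult_left_mono[OF y2 zero_le_power2[of y]] by (simp only: mult_1_right)
      have "(3::real)^2 \<le> (2 * y + 1)^2" using L1 by (intro power_mono) auto
      then have C: "9 \<le> (2 * y + 1)^2" by simp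
      have D: "9 * (y^2 * y^2) \<le> (y^2 * y^2) * (2 * y + 1)^2"
        using mult_left_mono[OF C, of "y^2 * y^2"] by (simp only: mult.commute zero_le_mult_iff zero_le_power2 simp_thms)
      have "(y^2 * (2 * y + 1))^2 = (y^2 * y^2) * (2 * y + 1)^2" by (simp add: power_mult_distrib power2_eq_square)
      moreover have "0 \<le> y^2 * y^2" by simp
      ultimately show ?thesis using A B D unfolding y_def[symmetric] by linarith
    qed
    have "a^2 * real M \<le> a^2 * (2 * (real L + 1) * real s)" using M2s by (intro mult_left_mono) auto
    also have "\<dots> \<le> real s / ((real L + 1) * (24^L)^2)"
    proof -
      have "a^2 * (2 * (real L + 1) * real s) * ((real L + 1) * (24^L)^2)
          = real s * ((2 * (real L + 1)^2) * (24^L * 24^L)) / (real L^2 * (2 * real L + 1))^2 / (2^(7*L) * 2^(7*L))"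
        unfolding a_def by (simp add: power2_eq_square field_simps)
      also have "\<dots> \<le> real s * ((real L^2 * (2 * real L + 1))^2 * (2^(7*L) * 2^(7*L))) / (real L^2 * (2 * real L + 1))^2 / (2^(7*L) * 2^(7*L))"
      proof -
        have m: "(2 * (real L + 1)^2) * (24^L * 24^L) \<le> (real L^2 * (2 * real L + 1))^2 * (2^(7*L) * 2^(7*L))"
          by (rule mult_mono[OF c2 c1]) auto
        show ?thesis
          by (rule divide_right_mono, rule divide_right_mono, rule mult_left_mono[OF m]) auto
      qed
      also have "\<dots> = real s" using assms by simp
      finally show ?thesis by (simp add: le_divide_eq)
    qed
    also have "\<dots> \<le> S" by (rule Slow)
    finally have "a^2 \<le> S / real M" using Mpos by (simp add: le_divide_eq mult.commute)
    then show ?thesis unfolding eq by (rule real_le_rsqrt)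
  qed
  define A where "A = (\<lambda>i j. Bbar M i j / sqrt (real M))"
  define X where "X = {mat_vec_norm M (L+1) A x | x. (\<Sum>j<L+1. (x j)^2) = 1}"
  define x0 :: "nat \<Rightarrow> real" where "x0 = (\<lambda>j. if j = 0 then 1 else 0)"
  have x0: "(\<Sum>j<L+1. (x0 j)^2) = 1"
  proof -
    have "(\<Sum>j<Suc L. (x0 j)^2) = 1"
      unfolding sum.lessThan_Suc_shift x0_def by simp
    then show ?thesis by simp
  qed
  have ne: "X \<noteq> {}"
  proof -
    have "mat_vec_norm M (L+1) A x0 \<in> X" unfolding X_def
      by (intro CollectI exI[of _ x0] conjI refl x0)
    then show ?thesis by (metis empty_iff)
  qed
  have "a \<le> Inf X"
  proof (rule cInf_greatest[OF ne])
    fix z assume "z \<in> X"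
    then obtain x where z: "z = mat_vec_norm M (L+1) A x" and hx: "(\<Sum>j<L+1. (x j)^2) = 1"
      unfolding X_def by blast
    show "a \<le> z" unfolding z A_def by (rule key[OF hx])
  qed
  then have "a \<le> sigma_min M (L + 1) (\<lambda>i j. Bbar M i j / sqrt (real M))"
    unfolding sigma_min_def X_def A_def .
  then show ?thesis using ab unfolding a_def b_def by linarith
qed

end
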